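(* For all $\varepsilon,\varepsilon'\in\mathbb R$ the Lie algebras $\mathfrak g_\varepsilon$ and $\mathfrak g_{\varepsilon'}$ are isomorphic, but the metric Lie algebras $(\mathfrak g_\varepsilon,\langle\cdot,\cdot\rangle)$ and $(\mathfrak g_{\varepsilon'},\langle\cdot,\cdot\rangle)$ are isometrically isomorphic (i.e. there is a Lie algebra isomorphism preserving the inner products) if and only if $\varepsilon=\varepsilon'$.
   Context: For $\varepsilon\in\mathbb R$, $\mathfrak g_\varepsilon$ is the Lie algebra with basis $e_1,\dots,e_7$ and nonzero brackets $[e_1,e_5]=\tfrac12e_1$, $[e_2,e_5]=-\tfrac12e_2$, $[e_2,e_6]=-\tfrac12e_1$, $[e_3,e_5]=2e_3$, $[e_3,e_7]=-\tfrac12e_1$, $[e_4,e_5]=-e_2$, $[e_4,e_6]=-e_1$, $[e_5,e_6]=-\varepsilon e_2-2e_4-e_6$, $[e_5,e_7]=-\varepsilon e_3+\tfrac32e_7$, $[e_6,e_7]=-\sqrt2e_2$. With dual basis $e^i$, $\langle\cdot,\cdot\rangle=2(e^1\cdot e^5+e^2\cdot e^6+e^3\cdot e^7)-(e^4)^2$, an inner product of signature $(4,3)$ on $\mathfrak g_\varepsilon$. *)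

theory Defs
  imports "HOL-Analysis.Analysis"
begin

definition idx :: "nat \<Rightarrow> 7" where
  "idx i = of_nat (i - 1)"

definition ebas :: "nat \<Rightarrow> real ^ 7" where
  "ebas i = axis (idx i) 1"

definition brk0 :: "real \<Rightarrow> nat \<Rightarrow> nat \<Rightarrow> real ^ 7" where
  "brk0 eps i j =
    (if (i, j) = (1, 5) then (1/2) *\<^sub>R ebas 1
     else if (i, j) = (2, 5) then (-1/2) *\<^sub>R ebas 2
     else if (i, j) = (2, 6) then (-1/2) *\<^sub>R ebas 1
     else if (i, j) = (3, 5) then 2 *\<^sub>R ebas 3
     else if (i, j) = (3, 7) then (-1/2) *\<^sub>R ebas 1
     else if (i, j) = (4, 5) then - ebas 2
     else if (i, j) = (4, 6) then - ebas 1
     else if (i, j) = (5, 6) then (- eps) *\<^sub>R ebas 2 - 2 *\<^sub>R ebas 4 - ebas 6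
     else if (i, j) = (5, 7) then (- eps) *\<^sub>R ebas 3 + (3/2) *\<^sub>R ebas 7
     else if (i, j) = (6, 7) then (- sqrt 2) *\<^sub>R ebas 2
     else 0)"

definition brk :: "real \<Rightarrow> nat \<Rightarrow> nat \<Rightarrow> real ^ 7" where
  "brk eps i j = (if i < j then brk0 eps i j else if j < i then - brk0 eps j i else 0)"

definition lie_br :: "real \<Rightarrow> real ^ 7 \<Rightarrow> real ^ 7 \<Rightarrow> real ^ 7" where
  "lie_br eps x y =
     (\<Sum>i\<in>{1..7}. \<Sum>j\<in>{1..7}. (x $ idx i * y $ idx j) *\<^sub>R brk eps i j)"

text \<open>The inner product 2(e^1 e^5 + e^2 e^6 + e^3 e^7) - (e^4)^2, with the
  symmetric product e^i e^j = (e^i \<otimes> e^j + e^j \<otimes> e^i)/2, so that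
  <e_1,e_5> = <e_2,e_6> = <e_3,e_7> = 1 and <e_4,e_4> = -1.\<close>
definition ip :: "real ^ 7 \<Rightarrow> real ^ 7 \<Rightarrow> real" where
  "ip x y =
     x $ idx 1 * y $ idx 5 + x $ idx 5 * y $ idx 1
   + x $ idx 2 * y $ idx 6 + x $ idx 6 * y $ idx 2
   + x $ idx 3 * y $ idx 7 + x $ idx 7 * y $ idx 3
   - x $ idx 4 * y $ idx 4"

definition lie_iso :: "real \<Rightarrow> real \<Rightarrow> (real ^ 7 \<Rightarrow> real ^ 7) \<Rightarrow> bool" where
  "lie_iso eps eps' f \<longleftrightarrow> linear f \<and> bij f \<and>
     (\<forall>x y. f (lie_br eps x y) = lie_br eps' (f x) (f y))"

definition metric_lie_iso :: "real \<Rightarrow> real \<Rightarrow> (real ^ 7 \<Rightarrow> real ^ 7) \<Rightarrow> bool" where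
  "metric_lie_iso eps eps' f \<longleftrightarrow> lie_iso eps eps' f \<and>
     (\<forall>x y. ip (f x) (f y) = ip x y)"

end

theory Submission
  imports Defs
begin
lemma idx_vals: "idx 1 = 0" "idx 2 = 1" "idx 3 = 2" "idx 4 = 3" "idx 5 = 4" "idx 6 = 5" "idx 7 = 6"
  by (simp_all add: idx_def)

lemma idx_Suc0: "idx (Suc 0) = 0" by (simp add: idx_def)

lemma exhaust_7:
  fixes x :: 7
  shows "x = 0 \<or> x = 1 \<or> x = 2 \<or> x = 3 \<or> x = 4 \<or> x = 5 \<or> x = 6"
proof (induct x)
  case (of_int z)
  then have "z = 0 \<or> z = 1 \<or> z = 2 \<or> z = 3 \<or> z = 4 \<or> z = 5 \<or> z = 6" by fastforce
  then show ?case by auto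
qed

lemma forall_7: "(\<forall>i::7. P i) \<longleftrightarrow> P 0 \<and> P 1 \<and> P 2 \<and> P 3 \<and> P 4 \<and> P 5 \<and> P 6"
  by (metis exhaust_7)

definition pp :: "real^7 \<Rightarrow> real^7 \<Rightarrow> nat \<Rightarrow> nat \<Rightarrow> real" where
  "pp x y i j = x $ idx i * y $ idx j - x $ idx j * y $ idx i"

lemma set17: "{1..7::nat} = {1,2,3,4,5,6,7}" by auto

lemma lb_comps:
  "lie_br e x y $ 0 = 1/2 * pp x y 1 5 - 1/2 * pp x y 2 6 - 1/2 * pp x y 3 7 - pp x y 4 6"
  "lie_br e x y $ 1 = -1/2 * pp x y 2 5 - pp x y 4 5 - e * pp x y 5 6 - sqrt 2 * pp x y 6 7"
  "lie_br e x y $ 2 = 2 * pp x y 3 5 - e * pp x y 5 7"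
  "lie_br e x y $ 3 = -2 * pp x y 5 6"
  "lie_br e x y $ 4 = 0"
  "lie_br e x y $ 5 = - pp x y 5 6"
  "lie_br e x y $ 6 = 3/2 * pp x y 5 7"
  unfolding lie_br_def set17
  by (simp_all add: brk_def brk0_def ebas_def idx_vals idx_Suc0 axis_def pp_def algebra_simps)

lemmas bsimps = vec_eq_iff forall_7 lb_comps pp_def ebas_def axis_def idx_vals idx_Suc0

lemma b15: "lie_br e (ebas 1) (ebas 5) = (1/2) *\<^sub>R ebas 1" by (simp add: bsimps)
lemma b25: "lie_br e (ebas 2) (ebas 5) = (-1/2) *\<^sub>R ebas 2" by (simp add: bsimps)
lemma b26: "lie_br e (ebas 2) (ebas 6) = (-1/2) *\<^sub>R ebas 1" by (simp add: bsimps)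
lemma b35: "lie_br e (ebas 3) (ebas 5) = 2 *\<^sub>R ebas 3" by (simp add: bsimps)
lemma b37: "lie_br e (ebas 3) (ebas 7) = (-1/2) *\<^sub>R ebas 1" by (simp add: bsimps)
lemma b45: "lie_br e (ebas 4) (ebas 5) = - ebas 2" by (simp add: bsimps)
lemma b56: "lie_br e (ebas 5) (ebas 6) = (- e) *\<^sub>R ebas 2 - 2 *\<^sub>R ebas 4 - ebas 6" by (simp add: bsimps)
lemma b57: "lie_br e (ebas 5) (ebas 7) = (- e) *\<^sub>R ebas 3 + (3/2) *\<^sub>R ebas 7" by (simp add: bsimps)
lemma b67: "lie_br e (ebas 6) (ebas 7) = (- sqrt 2) *\<^sub>R ebas 2" by (simp add: bsimps)
lemma b12: "lie_br e (ebas 1) (ebas 2) = 0" by (simp add: bsimps)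
lemma b16: "lie_br e (ebas 1) (ebas 6) = 0" by (simp add: bsimps)

lemma ipsimp: "ip x y = x$0 * y$4 + x$4 * y$0 + x$1 * y$5 + x$5 * y$1 + x$2 * y$6 + x$6 * y$2 - x$3 * y$3"
  by (simp add: ip_def idx_vals idx_Suc0)

lemma vcomps: "X = (Y::real^7) \<Longrightarrow> X$0 = Y$0 \<and> X$1 = Y$1 \<and> X$2 = Y$2 \<and> X$3 = Y$3 \<and> X$4 = Y$4 \<and> X$5 = Y$5 \<and> X$6 = Y$6"
  by simp


lemmas csimps = vector_scaleR_component vector_add_component vector_minus_component vector_uminus_component zero_index real_scaleR_def

lemma hard:
  assumes "metric_lie_iso eps eps' f"
  shows "eps = eps'"
proof -
  have lin: "linear f" and hom: "\<And>x y. f (lie_br eps x y) = lie_br eps' (f x) (f y)"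
    and iso: "\<And>x y. ip (f x) (f y) = ip x y"
    using assms by (auto simp: metric_lie_iso_def lie_iso_def)
  define v1 where "v1 = f (ebas 1)"
  define v2 where "v2 = f (ebas 2)"
  define v3 where "v3 = f (ebas 3)"
  define v4 where "v4 = f (ebas 4)"
  define v5 where "v5 = f (ebas 5)"
  define v6 where "v6 = f (ebas 6)"
  define v7 where "v7 = f (ebas 7)"
  note v_defs = v1_def[symmetric] v2_def[symmetric] v3_def[symmetric] v4_def[symmetric]
     v5_def[symmetric] v6_def[symmetric] v7_def[symmetric]
  have r15: "lie_br eps' v1 v5 = (1/2) *\<^sub>R v1"
    using hom[of "ebas 1" "ebas 5"] unfolding b15 linear_cmul[OF lin] linear_add[OF lin] linear_diff[OF lin] linear_neg[OF lin] linear_0[OF lin] v_defs by simp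
  note c15 = vcomps[OF r15, simplified lb_comps pp_def idx_vals idx_Suc0 csimps]
  have r35: "lie_br eps' v3 v5 = 2 *\<^sub>R v3"
    using hom[of "ebas 3" "ebas 5"] unfolding b35 linear_cmul[OF lin] linear_add[OF lin] linear_diff[OF lin] linear_neg[OF lin] linear_0[OF lin] v_defs by simp
  note c35 = vcomps[OF r35, simplified lb_comps pp_def idx_vals idx_Suc0 csimps]
  have r57: "lie_br eps' v5 v7 = (- eps) *\<^sub>R v3 + (3/2) *\<^sub>R v7"
    using hom[of "ebas 5" "ebas 7"] unfolding b57 linear_cmul[OF lin] linear_add[OF lin] linear_diff[OF lin] linear_neg[OF lin] linear_0[OF lin] v_defs by simp
  note c57 = vcomps[OF r57, simplified lb_comps pp_def idx_vals idx_Suc0 csimps]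
  have r37: "lie_br eps' v3 v7 = (-1/2) *\<^sub>R v1"
    using hom[of "ebas 3" "ebas 7"] unfolding b37 linear_cmul[OF lin] linear_add[OF lin] linear_diff[OF lin] linear_neg[OF lin] linear_0[OF lin] v_defs by simp
  note c37 = vcomps[OF r37, simplified lb_comps pp_def idx_vals idx_Suc0 csimps]
  have r12: "lie_br eps' v1 v2 = 0"
    using hom[of "ebas 1" "ebas 2"] unfolding b12 linear_cmul[OF lin] linear_add[OF lin] linear_diff[OF lin] linear_neg[OF lin] linear_0[OF lin] v_defs by simp
  note c12 = vcomps[OF r12, simplified lb_comps pp_def idx_vals idx_Suc0 csimps]
  have r16: "lie_br eps' v1 v6 = 0"
    using hom[of "ebas 1" "ebas 6"] unfolding b16 linear_cmul[OF lin] linear_add[OF lin] linear_diff[OF lin] linear_neg[OF lin] linear_0[OF lin] v_defs by simp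
  note c16 = vcomps[OF r16, simplified lb_comps pp_def idx_vals idx_Suc0 csimps]
  have r26: "lie_br eps' v2 v6 = (-1/2) *\<^sub>R v1"
    using hom[of "ebas 2" "ebas 6"] unfolding b26 linear_cmul[OF lin] linear_add[OF lin] linear_diff[OF lin] linear_neg[OF lin] linear_0[OF lin] v_defs by simp
  note c26 = vcomps[OF r26, simplified lb_comps pp_def idx_vals idx_Suc0 csimps]
  have r67: "lie_br eps' v6 v7 = (- sqrt 2) *\<^sub>R v2"
    using hom[of "ebas 6" "ebas 7"] unfolding b67 linear_cmul[OF lin] linear_add[OF lin] linear_diff[OF lin] linear_neg[OF lin] linear_0[OF lin] v_defs by simp
  note c67 = vcomps[OF r67, simplified lb_comps pp_def idx_vals idx_Suc0 csimps]
  have r25: "lie_br eps' v2 v5 = (-1/2) *\<^sub>R v2"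
    using hom[of "ebas 2" "ebas 5"] unfolding b25 linear_cmul[OF lin] linear_add[OF lin] linear_diff[OF lin] linear_neg[OF lin] linear_0[OF lin] v_defs by simp
  note c25 = vcomps[OF r25, simplified lb_comps pp_def idx_vals idx_Suc0 csimps]
  have r45: "lie_br eps' v4 v5 = - v2"
    using hom[of "ebas 4" "ebas 5"] unfolding b45 linear_cmul[OF lin] linear_add[OF lin] linear_diff[OF lin] linear_neg[OF lin] linear_0[OF lin] v_defs by simp
  note c45 = vcomps[OF r45, simplified lb_comps pp_def idx_vals idx_Suc0 csimps]
  have r56: "lie_br eps' v5 v6 = (- eps) *\<^sub>R v2 - 2 *\<^sub>R v4 - v6"
    using hom[of "ebas 5" "ebas 6"] unfolding b56 linear_cmul[OF lin] linear_add[OF lin] linear_diff[OF lin] linear_neg[OF lin] linear_0[OF lin] v_defs by simp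
  note c56 = vcomps[OF r56, simplified lb_comps pp_def idx_vals idx_Suc0 csimps]
  have i15: "ip v1 v5 = 1"
    unfolding v1_def v5_def iso by (simp add: ipsimp ebas_def axis_def idx_vals idx_Suc0)
  note i15' = i15[unfolded ipsimp]
  have i12: "ip v1 v2 = 0"
    unfolding v1_def v2_def iso by (simp add: ipsimp ebas_def axis_def idx_vals idx_Suc0)
  note i12' = i12[unfolded ipsimp]
  have i13: "ip v1 v3 = 0"
    unfolding v1_def v3_def iso by (simp add: ipsimp ebas_def axis_def idx_vals idx_Suc0)
  note i13' = i13[unfolded ipsimp]
  have i14: "ip v1 v4 = 0"
    unfolding v1_def v4_def iso by (simp add: ipsimp ebas_def axis_def idx_vals idx_Suc0)
  note i14' = i14[unfolded ipsimp]
  have i16: "ip v1 v6 = 0"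
    unfolding v1_def v6_def iso by (simp add: ipsimp ebas_def axis_def idx_vals idx_Suc0)
  note i16' = i16[unfolded ipsimp]
  have i17: "ip v1 v7 = 0"
    unfolding v1_def v7_def iso by (simp add: ipsimp ebas_def axis_def idx_vals idx_Suc0)
  note i17' = i17[unfolded ipsimp]
  have i25: "ip v2 v5 = 0"
    unfolding v2_def v5_def iso by (simp add: ipsimp ebas_def axis_def idx_vals idx_Suc0)
  note i25' = i25[unfolded ipsimp]
  have i26: "ip v2 v6 = 1"
    unfolding v2_def v6_def iso by (simp add: ipsimp ebas_def axis_def idx_vals idx_Suc0)
  note i26' = i26[unfolded ipsimp]
  have i77: "ip v7 v7 = 0"
    unfolding v7_def v7_def iso by (simp add: ipsimp ebas_def axis_def idx_vals idx_Suc0)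
  note i77' = i77[unfolded ipsimp]
  have i37: "ip v3 v7 = 1"
    unfolding v3_def v7_def iso by (simp add: ipsimp ebas_def axis_def idx_vals idx_Suc0)
  note i37' = i37[unfolded ipsimp]
  have i44: "ip v4 v4 = -1"
    unfolding v4_def v4_def iso by (simp add: ipsimp ebas_def axis_def idx_vals idx_Suc0)
  note i44' = i44[unfolded ipsimp]
  have i46: "ip v4 v6 = 0"
    unfolding v4_def v6_def iso by (simp add: ipsimp ebas_def axis_def idx_vals idx_Suc0)
  note i46' = i46[unfolded ipsimp]

  have sq2: "sqrt 2 \<noteq> (0::real)" by simp
  have v35: "v3$4 = 0" using c35 by simp
  have v75: "v7$4 = 0" using c57 v35 by simp
  have v1z: "v1$2 = 0" "v1$3 = 0" "v1$4 = 0" "v1$5 = 0" "v1$6 = 0" using c37 v35 v75 by simp_all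
  have b0: "v1$1 = 0"
  proof (rule ccontr)
    assume bn: "v1$1 \<noteq> 0"
    have "v1$1 * (v5$4 + 1) = 0" using c15 v1z by (simp add: algebra_simps)
    then have s5: "v5$4 = -1" using bn by simp
    have "v2$4 = 0" using c12 v1z bn by simp
    moreover have "v2$5 = 0" using c12 v1z bn \<open>v2$4 = 0\<close> by simp
    moreover have "v6$4 = 0" using c16 v1z bn by simp
    moreover have "v6$5 = 0" using c16 v1z bn \<open>v6$4 = 0\<close> by simp
    ultimately have "v1$1 = 0" using c26 by simp
    then show False using bn by simp
  qed
  have a1: "v1$0 = 1" and s5: "v5$4 = 1"
  proof -
    have e1: "v1$0 * v5$4 = v1$0" using c15 v1z b0 by simp
    have e2: "v1$0 * v5$4 = 1" using i15' v1z b0 by simp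
    show "v1$0 = 1" using e1 e2 by simp
    then show "v5$4 = 1" using e2 by simp
  qed
  have z5: "v2$4 = 0" "v3$4 = 0" "v4$4 = 0" "v6$4 = 0" "v7$4 = 0"
    using i12' i13' i14' i16' i17' a1 v1z b0 by simp_all
  have v2z: "v2$2 = 0" "v2$3 = 0" "v2$5 = 0" "v2$6 = 0"
    using c67 z5 sq2 by simp_all
  have cd1: "v2$0 = v2$1 * v5$5 / 2" using c25 z5 v2z s5 by (simp add: algebra_simps)
  have cd2: "v2$0 + v2$1 * v5$5 = 0" using i25' z5 v2z s5 by simp
  have c0: "v2$0 = 0" using cd1 cd2 by linarith
  have ds: "v2$1 * v5$5 = 0" using cd1 cd2 by linarith
  have du: "v2$1 * v6$5 = 1" using i26' z5 v2z c0 by simp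
  have s6: "v5$5 = 0" using ds du by auto
  have v3z: "v3$5 = 0" "v3$3 = 0" "v3$6 = 0" using c35 z5 s5 s6 by simp_all
  have t5: "v7$5 = 0" "v7$3 = 0" using c57 z5 s5 s6 v3z by simp_all
  have t3e: "-2 * v7$2 - eps' * v7$6 = - eps * v3$2 + 3/2 * v7$2" using c57 z5 s5 s6 v3z t5 by simp
  have t3t7: "v7$2 * v7$6 = 0" using i77' z5 t5 by simp
  have gt: "v3$2 * v7$6 = 1" using i37' z5 t5 v3z by simp
  have t3: "v7$2 = 0" using t3t7 gt by auto
  have ee: "eps' * v7$6 = eps * v3$2" using t3e t3 by simp
  have ut: "v6$5 * v7$6 = v2$1" using c67 z5 t5 sq2 by simp
  have r6a: "v4$6 = 0" "v4$5 = 0" using c45 z5 s5 s6 v2z by simp_all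
  have r6: "v4$6 = 0" "v4$5 = 0" "v4$2 = 0" using c45 z5 s5 s6 v2z r6a by simp_all
  have rd: "v4$1 / 2 + v4$3 = v2$1" using c45 z5 s5 s6 v2z r6 by simp
  have r4sq: "v4$3 * v4$3 = 1" using i44' z5 r6 by simp
  have u4: "2 * v4$3 = 2 * v6$5 - v6$3" using c56 z5 s5 s6 v2z by simp
  have ipr: "v4$1 * v6$5 - v4$3 * v6$3 = 0" using i46' z5 r6 by simp
  have ru: "v4$3 * v6$5 = 1"
  proof -
    have "v4$1 = 2 * v2$1 - 2 * v4$3" using rd by simp
    moreover have "v6$3 = 2 * v6$5 - 2 * v4$3" using u4 by simp
    ultimately have "(2 * v2$1 - 2 * v4$3) * v6$5 - v4$3 * (2 * v6$5 - 2 * v4$3) = 0" using ipr by simp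
    then have "2 * (v2$1 * v6$5) - 4 * (v4$3 * v6$5) + 2 * (v4$3 * v4$3) = 0" by (simp add: algebra_simps)
    then show ?thesis using du r4sq by simp
  qed
  have dr: "v2$1 = v4$3"
  proof -
    have "v2$1 = v2$1 * (v4$3 * v6$5)" using ru by simp
    also have "\<dots> = v4$3 * (v2$1 * v6$5)" by (simp add: algebra_simps)
    finally show ?thesis using du by simp
  qed
  have t7: "v7$6 = 1"
  proof -
    have "v7$6 = (v2$1 * v6$5) * v7$6" using du by simp
    also have "\<dots> = v2$1 * v2$1" using ut by (simp add: algebra_simps)
    finally show ?thesis using dr r4sq by simp
  qed
  have g1: "v3$2 = 1" using gt t7 by simp
  show ?thesis using ee t7 g1 by simp
qed

definition Lm :: "real \<Rightarrow> real^7 \<Rightarrow> real^7" where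
  "Lm d x = x + ((2*d/3) * x$5) *\<^sub>R ebas 2 - ((2*d/7) * x$6) *\<^sub>R ebas 3"

lemma Lm_comps:
  "Lm d x $ 0 = x$0" "Lm d x $ 1 = x$1 + 2*d/3 * x$5" "Lm d x $ 2 = x$2 - 2*d/7 * x$6"
  "Lm d x $ 3 = x$3" "Lm d x $ 4 = x$4" "Lm d x $ 5 = x$5" "Lm d x $ 6 = x$6"
  by (simp_all add: Lm_def ebas_def axis_def idx_vals)

lemma Lm_linear: "linear (Lm d)"
  by (rule linearI) (simp_all add: vec_eq_iff forall_7 Lm_comps algebra_simps)

lemma Lm_inv: "Lm (-d) (Lm d x) = x"
  by (simp add: vec_eq_iff forall_7 Lm_comps)

lemma Lm_bij: "bij (Lm d)"
proof (rule o_bij)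
  show "Lm (-d) \<circ> Lm d = id" by (rule ext) (simp add: Lm_inv)
  show "Lm d \<circ> Lm (-d) = id" by (rule ext) (metis Lm_inv comp_apply id_apply minus_minus)
qed

lemma Lm_hom: "Lm (eps' - eps) (lie_br eps x y) = lie_br eps' (Lm (eps' - eps) x) (Lm (eps' - eps) y)"
  apply (simp add: vec_eq_iff forall_7 Lm_comps lb_comps pp_def idx_vals idx_Suc0)
  apply (intro conjI)
  apply (simp_all add: field_simps)
  done

theorem mainTheorem15:
  fixes eps eps' :: real
  shows "(\<exists>f. lie_iso eps eps' f) \<and> ((\<exists>f. metric_lie_iso eps eps' f) \<longleftrightarrow> eps = eps')"
proof (intro conjI iffI)
  show "\<exists>f. lie_iso eps eps' f"
    using Lm_linear Lm_bij Lm_hom unfolding lie_iso_def by blast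
  show "eps = eps'" if "\<exists>f. metric_lie_iso eps eps' f" using that hard by blast
  show "\<exists>f. metric_lie_iso eps eps' f" if "eps = eps'"
    using that unfolding metric_lie_iso_def lie_iso_def by (intro exI[of _ id]) (simp add: linear_id)
qed
end
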